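(* In the setting of the context, suppose moreover that $B_{0,w}\le 2^{-l}\binom{n}{w}$ for all $w$ with $d_0\le w\le n$ (binomial weight distribution). Then $$P(E=0)\le 2^{-l}(1+\beta)^n,\qquad\text{equivalently}\qquad \log_2 P(E=0)\le n\bigl\{R-\bigl(1-\log_2(1+\beta)\bigr)\bigr\}\ \text{ when } l=n-k,\ R=k/n.$$
   Context: All arithmetic is over $\mathrm{GF}(2)$. $G_0$ is a fixed $n\times l$ binary matrix, $G_1$ a fixed $n\times k$ binary matrix, $\mathbf m\in\{0,1\}^k$ fixed. $\mathcal C_0^{\perp}=\{\mathbf x\in\{0,1\}^n: G_0^T\mathbf x=\mathbf 0\}$; $B_{0,w}$ is the number of vectors of Hamming weight $w$ in $\mathcal C_0^\perp$, and $d_0$ is the minimum Hamming weight of a nonzero vector of $\mathcal C_0^\perp$. Defect model: each of the $n$ memory cells is independently defective with probability $\beta\in(0,1)$; a defective cell is stuck at $0$ or at $1$, each with probability $1/2$, independently. Let $\mathcal U$ be the set of defect positions and $\mathbf s^{\mathcal U}$ the vector of stuck-at values. For a matrix $M$ (resp. vector $\mathbf v$) with rows indexed by $\{1,\dots,n\}$, $M^{\mathcal U}$ (resp. $\mathbf v^{\mathcal U}$) denotes the rows indexed by $\mathcal U$. Encoding: with $\mathbf b^{\mathcal U}=(G_1\mathbf m)^{\mathcal U}+\mathbf s^{\mathcal U}$, look for $\mathbf d\in\{0,1\}^l$ with $G_0^{\mathcal U}\mathbf d=\mathbf b^{\mathcal U}$; $E=1$ if such $\mathbf d$ exists and $E=0$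 (encoding failure) otherwise. (For the binary defect channel alone, the total redundancy is $l=n-k$.) *)

theory Defs
  imports Complex_Main "HOL-Library.Z2"
begin

text \<open>Vectors over GF(2) are functions nat => bit, relevant on indices below the
length; matrices are functions nat => nat => bit (row index, column index).\<close>

definition mat_vec :: "(nat \<Rightarrow> nat \<Rightarrow> bit) \<Rightarrow> nat \<Rightarrow> (nat \<Rightarrow> bit) \<Rightarrow> nat \<Rightarrow> bit" where
  "mat_vec M c v i = (\<Sum>j<c. M i j * v j)"

definition bvecs :: "nat \<Rightarrow> (nat \<Rightarrow> bit) set" where
  "bvecs n = {x. \<forall>i. n \<le> i \<longrightarrow> x i = 0}"

definition hweight :: "nat \<Rightarrow> (nat \<Rightarrow> bit) \<Rightarrow> nat" where
  "hweight n x = card {i. i < n \<and> x i \<noteq> 0}"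

definition dual_code :: "(nat \<Rightarrow> nat \<Rightarrow> bit) \<Rightarrow> nat \<Rightarrow> nat \<Rightarrow> (nat \<Rightarrow> bit) set" where
  "dual_code G0 n l = {x \<in> bvecs n. \<forall>j<l. (\<Sum>i<n. G0 i j * x i) = 0}"

definition weight_enum :: "(nat \<Rightarrow> nat \<Rightarrow> bit) \<Rightarrow> nat \<Rightarrow> nat \<Rightarrow> nat \<Rightarrow> nat" where
  "weight_enum G0 n l w = card {x \<in> dual_code G0 n l. hweight n x = w}"

text \<open>Minimum distance d_0; by convention n+1 (i.e. "infinity") if the dual code is trivial.\<close>
definition min_dist :: "(nat \<Rightarrow> nat \<Rightarrow> bit) \<Rightarrow> nat \<Rightarrow> nat \<Rightarrow> nat" where
  "min_dist G0 n l =
     (if \<exists>x\<in>dual_code G0 n l. x \<noteq> (\<lambda>_. 0)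
      then Min {hweight n x | x. x \<in> dual_code G0 n l \<and> x \<noteq> (\<lambda>_. 0)}
      else n + 1)"

text \<open>Defect configurations: c i = None (cell i not defective), c i = Some s (stuck at s).
The defect set U is {i. c i \<noteq> None}, the stuck-at values are the Some-values.\<close>
definition defect_configs :: "nat \<Rightarrow> (nat \<Rightarrow> bit option) set" where
  "defect_configs n = {c. \<forall>i. n \<le> i \<longrightarrow> c i = None}"

definition config_prob :: "real \<Rightarrow> nat \<Rightarrow> (nat \<Rightarrow> bit option) \<Rightarrow> real" where
  "config_prob \<beta> n c = (\<Prod>i<n. (case c i of None \<Rightarrow> 1 - \<beta> | Some _ \<Rightarrow> \<beta> / 2))"

text \<open>Encoding success E = 1: exists d in GF(2)^l with G_0^U d = (G_1 m)^U + s^U.\<close>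
definition encodable ::
  "(nat \<Rightarrow> nat \<Rightarrow> bit) \<Rightarrow> (nat \<Rightarrow> nat \<Rightarrow> bit) \<Rightarrow> nat \<Rightarrow> nat \<Rightarrow> nat \<Rightarrow> (nat \<Rightarrow> bit)
     \<Rightarrow> (nat \<Rightarrow> bit option) \<Rightarrow> bool" where
  "encodable G0 G1 n l k m c =
     (\<exists>d \<in> bvecs l. \<forall>i<n. \<forall>s. c i = Some s \<longrightarrow>
        mat_vec G0 l d i = mat_vec G1 k m i + s)"

definition fail_prob ::
  "real \<Rightarrow> (nat \<Rightarrow> nat \<Rightarrow> bit) \<Rightarrow> (nat \<Rightarrow> nat \<Rightarrow> bit) \<Rightarrow> nat \<Rightarrow> nat \<Rightarrow> nat \<Rightarrow> (nat \<Rightarrow> bit) \<Rightarrow> real" where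
  "fail_prob \<beta> G0 G1 n l k m =
     (\<Sum>c\<in>{c \<in> defect_configs n. \<not> encodable G0 G1 n l k m c}. config_prob \<beta> n c)"

end

theory Submission
  imports Defs
begin


lemma bit_UNIV: "(UNIV :: bit set) = {0, 1}"
  using bit.exhaust by auto

lemma bit_add_self[simp]: "(a::bit) + a = 0"
  by (cases a) simp_all

definition Fs :: "nat \<Rightarrow> (nat \<Rightarrow> 'b set) \<Rightarrow> 'b \<Rightarrow> (nat \<Rightarrow> 'b) set" where
  "Fs n S z = {c. (\<forall>i<n. c i \<in> S i) \<and> (\<forall>i. n \<le> i \<longrightarrow> c i = z)}"

lemma Fs_0: "Fs 0 S z = {\<lambda>_. z}"
  by (auto simp: Fs_def)

lemma Fs_Suc: "Fs (Suc n) S z = (\<lambda>(c,a). c(n:=a)) ` (Fs n S z \<times> S n)"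
proof
  show "Fs (Suc n) S z \<subseteq> (\<lambda>(c,a). c(n:=a)) ` (Fs n S z \<times> S n)"
  proof
    fix c assume c: "c \<in> Fs (Suc n) S z"
    have "c = (\<lambda>(c,a). c(n:=a)) (c(n:=z), c n)" by auto
    moreover have "(c(n:=z), c n) \<in> Fs n S z \<times> S n"
      using c by (auto simp: Fs_def)
    ultimately show "c \<in> (\<lambda>(c,a). c(n:=a)) ` (Fs n S z \<times> S n)" by blast
  qed
next
  show "(\<lambda>(c,a). c(n:=a)) ` (Fs n S z \<times> S n) \<subseteq> Fs (Suc n) S z"
    by (auto simp: Fs_def less_Suc_eq)
qed

lemma Fs_inj: "inj_on (\<lambda>(c,a). c(n:=a)) (Fs n S z \<times> S n)"
proof (rule inj_onI, clarsimp)
  fix c a c' a'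
  assume c: "c \<in> Fs n S z" and c': "c' \<in> Fs n S z" and e: "c(n := a) = c'(n := a')"
  have "a = a'" using fun_cong[OF e, of n] by simp
  moreover have "c x = c' x" for x
    using fun_cong[OF e, of x] c c' by (cases "x = n") (auto simp: Fs_def)
  ultimately show "c = c' \<and> a = a'" by auto
qed

lemma Fs_finite: "(\<And>i. finite (S i)) \<Longrightarrow> finite (Fs n S z)"
  by (induction n) (auto simp: Fs_0 Fs_Suc)

lemma Fs_sum:
  fixes f :: "nat \<Rightarrow> 'b \<Rightarrow> real"
  assumes "\<And>i. finite (S i)"
  shows "(\<Sum>c\<in>Fs n S z. \<Prod>i<n. f i (c i)) = (\<Prod>i<n. \<Sum>a\<in>S i. f i a)"
proof (induction n)
  case 0 then show ?case by (simp add: Fs_0)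
next
  case (Suc n)
  have "(\<Sum>c\<in>Fs (Suc n) S z. \<Prod>i<Suc n. f i (c i))
      = (\<Sum>p\<in>Fs n S z \<times> S n. \<Prod>i<Suc n. f i (((\<lambda>(c,a). c(n:=a)) p) i))"
    unfolding Fs_Suc by (rule sum.reindex[OF Fs_inj, unfolded comp_def])
  also have "\<dots> = (\<Sum>p\<in>Fs n S z \<times> S n. (\<Prod>i<n. f i (fst p i)) * f n (snd p))"
    by (rule sum.cong) (auto intro!: prod.cong)
  also have "\<dots> = (\<Sum>c\<in>Fs n S z. \<Sum>a\<in>S n. (\<Prod>i<n. f i (c i)) * f n a)"
    by (simp add: sum.cartesian_product split_def)
  also have "\<dots> = (\<Sum>c\<in>Fs n S z. (\<Prod>i<n. f i (c i))) * (\<Sum>a\<in>S n. f n a)"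
    by (rule sum_product[symmetric])
  finally show ?case using Suc by simp
qed



declare add_bit_eq_xor[simp del] mult_bit_eq_and[simp del]

lemma alt:
  fixes A :: "nat \<Rightarrow> nat \<Rightarrow> bit" and b :: "nat \<Rightarrow> bit"
  assumes "finite U"
  shows "(\<exists>d. \<forall>i\<in>U. (\<Sum>j<l. A i j * d j) = b i) \<or>
         (\<exists>y. (\<forall>j<l. (\<Sum>i\<in>U. y i * A i j) = 0) \<and> (\<Sum>i\<in>U. y i * b i) = 1)"
  using assms
proof (induction l arbitrary: A b U)
  case 0
  show ?case
  proof (cases "\<forall>i\<in>U. b i = 0")
    case True then show ?thesis by auto
  next
    case False
    then obtain p where p: "p \<in> U" "b p = 1" by auto
    let ?y = "\<lambda>i. if i = p then 1 else (0::bit)"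
    have "(\<Sum>i\<in>U. ?y i * b i) = (\<Sum>i\<in>U. if i = p then b i else 0)"
      by (rule sum.cong) auto
    also have "\<dots> = 1" using p 0 by (simp add: sum.delta)
    finally have "(\<Sum>i\<in>U. ?y i * b i) = 1" .
    then show ?thesis by auto
  qed
next
  case (Suc l)
  show ?case
  proof (cases "\<forall>i\<in>U. A i l = 0")
    case True
    from Suc.IH[OF Suc.prems, of A b] show ?thesis
    proof
      assume "\<exists>d. \<forall>i\<in>U. (\<Sum>j<l. A i j * d j) = b i"
      then show ?thesis using True by auto
    next
      assume "\<exists>y. (\<forall>j<l. (\<Sum>i\<in>U. y i * A i j) = 0) \<and> (\<Sum>i\<in>U. y i * b i) = 1"
      then obtain y where "\<forall>j<l. (\<Sum>i\<in>U. y i * A i j) = 0" "(\<Sum>i\<in>U. y i * b i) = 1" by blast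
      then show ?thesis using True by (auto simp: less_Suc_eq)
    qed
  next
    case False
    then obtain p where p: "p \<in> U" "A p l = 1" by auto
    define U' where "U' = U - {p}"
    define A' where "A' = (\<lambda>i j. A i j + A i l * A p j)"
    define b' where "b' = (\<lambda>i. b i + A i l * b p)"
    have fin: "finite U'" using Suc.prems U'_def by auto
    have Aeq: "A i j = A' i j + A i l * A p j" for i j
      unfolding A'_def by (simp add: add.assoc)
    have beq: "b i = b' i + A i l * b p" for i
      unfolding b'_def by (simp add: add.assoc)
    have splitU: "(\<Sum>i\<in>U. f i) = f p + (\<Sum>i\<in>U'. f i)" for f :: "nat \<Rightarrow> bit"
      unfolding U'_def using Suc.prems p by (simp add: sum.remove)
    from Suc.IH[OF fin, of A' b'] show ?thesis
    proof
      assume "\<exists>d. \<forall>i\<in>U'. (\<Sum>j<l. A' i j * d j) = b' i"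
      then obtain d' where d': "\<forall>i\<in>U'. (\<Sum>j<l. A' i j * d' j) = b' i" by blast
      define Sp where "Sp = (\<Sum>j<l. A p j * d' j)"
      define d where "d = d'(l := b p + Sp)"
      have "(\<Sum>j<Suc l. A i j * d j) = b i" if i: "i \<in> U" for i
      proof -
        have "(\<Sum>j<Suc l. A i j * d j) = (\<Sum>j<l. A i j * d' j) + A i l * (b p + Sp)"
          unfolding d_def by (simp add: sum.lessThan_Suc)
        also have "(\<Sum>j<l. A i j * d' j) = (\<Sum>j<l. A' i j * d' j) + A i l * Sp"
          unfolding Sp_def
          by (subst Aeq) (simp add: distrib_right sum.distrib sum_distrib_left mult.assoc)
        finally have e: "(\<Sum>j<Suc l. A i j * d j) = (\<Sum>j<l. A' i j * d' j) + A i l * Sp + A i l * (b p + Sp)" .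
        show ?thesis
        proof (cases "i = p")
          case True
          have "(\<Sum>j<l. A' p j * d' j) = 0"
            unfolding A'_def using p by (simp add: distrib_right)
          then show ?thesis using e True p by (simp add: distrib_left add.assoc)
        next
          case False
          then have "i \<in> U'" using i U'_def by auto
          then have "(\<Sum>j<l. A' i j * d' j) = b' i" using d' by auto
          then show ?thesis using e unfolding b'_def
            by (simp add: distrib_left add.assoc add.left_commute[of "A i l * Sp"])
        qed
      qed
      then show ?thesis by blast
    next
      assume "\<exists>y. (\<forall>j<l. (\<Sum>i\<in>U'. y i * A' i j) = 0) \<and> (\<Sum>i\<in>U'. y i * b' i) = 1"
      then obtain y' where y'1: "\<forall>j<l. (\<Sum>i\<in>U'. y' i * A' i j) = 0"
        and y'2: "(\<Sum>i\<in>U'. y' i * b' i) = 1" by blast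
      define yp where "yp = (\<Sum>i\<in>U'. y' i * A i l)"
      define y where "y = y'(p := yp)"
      have yU': "(\<Sum>i\<in>U'. y i * f i) = (\<Sum>i\<in>U'. y' i * f i)" for f
        unfolding y_def U'_def by (rule sum.cong) auto
      have "(\<Sum>i\<in>U. y i * A i j) = 0" if j: "j < Suc l" for j
      proof (cases "j = l")
        case True
        have "y p = yp" by (simp add: y_def)
        then show ?thesis using p True by (simp add: splitU yU' yp_def[symmetric])
      next
        case False
        then have jl: "j < l" using j by auto
        have "(\<Sum>i\<in>U'. y' i * A i j) = (\<Sum>i\<in>U'. y' i * A' i j) + yp * A p j"
          unfolding yp_def
          by (subst Aeq) (simp add: distrib_left sum.distrib sum_distrib_right mult.assoc)
        moreover have "y p = yp" by (simp add: y_def)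
        ultimately show ?thesis using y'1 jl
          by (simp add: splitU yU')
      qed
      moreover have "(\<Sum>i\<in>U. y i * b i) = 1"
      proof -
        have "(\<Sum>i\<in>U'. y' i * b i) = (\<Sum>i\<in>U'. y' i * b' i) + yp * b p"
          unfolding yp_def
          by (subst beq) (simp add: distrib_left sum.distrib sum_distrib_right mult.assoc)
        moreover have "y p = yp" by (simp add: y_def)
        ultimately show ?thesis using y'2 by (simp add: splitU yU')
      qed
      ultimately show ?thesis by blast
    qed
  qed
qed


lemma finite_bit: "finite (UNIV :: bit set)"
  unfolding bit_UNIV by simp

lemma UNIV_bit_option: "(UNIV :: bit option set) = {None, Some 0, Some 1}"
proof -
  have "x \<in> {None, Some 0, Some 1}" for x :: "bit option"
    by (cases x) auto
  then show ?thesis by blast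
qed

lemma finite_bit_option: "finite (UNIV :: bit option set)"
  by (simp add: UNIV_bit_option)

lemma DC_Fs: "defect_configs n = Fs n (\<lambda>_. UNIV) None"
  by (auto simp: defect_configs_def Fs_def)

lemma bvecs_Fs: "bvecs n = Fs n (\<lambda>_. UNIV) 0"
  by (auto simp: bvecs_def Fs_def)

lemma finite_DC: "finite (defect_configs n)"
  unfolding DC_Fs by (rule Fs_finite) (rule finite_bit_option)

lemma finite_bvecs: "finite (bvecs n)"
  unfolding bvecs_Fs by (rule Fs_finite) (rule finite_bit)

lemma config_prob_nonneg: "0 \<le> \<beta> \<Longrightarrow> \<beta> \<le> 1 \<Longrightarrow> 0 \<le> config_prob \<beta> n c"
  unfolding config_prob_def by (rule prod_nonneg) (auto split: option.split)

lemma hweight_le: "hweight n y \<le> n"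
proof -
  have "hweight n y \<le> card {..<n}"
    unfolding hweight_def by (rule card_mono) auto
  then show ?thesis by simp
qed

lemma mass:
  fixes y :: "nat \<Rightarrow> bit"
  shows "(\<Sum>c\<in>{c\<in>defect_configs n. \<forall>i<n. y i \<noteq> 0 \<longrightarrow> c i \<noteq> None}. config_prob \<beta> n c)
         = \<beta> ^ hweight n y"
proof -
  define S where "S = (\<lambda>i. if y i \<noteq> 0 then {Some 0, Some (1::bit)} else UNIV)"
  define f where "f = (\<lambda>(i::nat) (ov::bit option). case ov of None \<Rightarrow> 1 - \<beta> | Some _ \<Rightarrow> \<beta> / 2)"
  have setEq: "{c\<in>defect_configs n. \<forall>i<n. y i \<noteq> 0 \<longrightarrow> c i \<noteq> None} = Fs n S None"
  proof -
    have "c i \<noteq> None \<longleftrightarrow> c i \<in> {Some 0, Some (1::bit)}" for c :: "nat \<Rightarrow> bit option" and i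
      by (cases "c i") (auto simp: bit_UNIV[symmetric] intro: bit.exhaust)
    then show ?thesis by (auto simp: defect_configs_def Fs_def S_def)
  qed
  have finS: "\<And>i. finite (S i)" by (simp add: S_def finite_bit finite_bit_option)
  have "(\<Sum>c\<in>Fs n S None. config_prob \<beta> n c) = (\<Sum>c\<in>Fs n S None. \<Prod>i<n. f i (c i))"
    unfolding config_prob_def f_def by simp
  also have "\<dots> = (\<Prod>i<n. \<Sum>a\<in>S i. f i a)" by (rule Fs_sum[OF finS])
  also have "\<dots> = (\<Prod>i<n. if y i \<noteq> 0 then \<beta> else 1)"
  proof (rule prod.cong[OF refl])
    fix i
    have U: "(UNIV :: bit option set) = {None, Some 0, Some 1}"
      by (rule UNIV_bit_option)
    show "(\<Sum>a\<in>S i. f i a) = (if y i \<noteq> 0 then \<beta> else 1)"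
      by (simp add: S_def f_def U)
  qed
  also have "\<dots> = \<beta> ^ hweight n y"
  proof -
    have "(\<Prod>i<n. if y i \<noteq> 0 then \<beta> else 1) = (\<Prod>i\<in>{i. i < n \<and> y i \<noteq> 0}. \<beta>)"
    proof -
      have "{..<n} \<inter> {x. y x \<noteq> 0} = {i. i < n \<and> y i \<noteq> 0}" by auto
      then show ?thesis by (subst prod.If_cases) auto
    qed
    then show ?thesis by (simp add: hweight_def)
  qed
  finally show ?thesis using setEq by simp
qed

lemma cover:
  assumes c: "c \<in> defect_configs n" and ne: "\<not> encodable G0 G1 n l k m c"
  shows "\<exists>y\<in>dual_code G0 n l - {\<lambda>_. 0}. \<forall>i<n. y i \<noteq> 0 \<longrightarrow> c i \<noteq> None"
proof -
  define U where "U = {i\<in>{..<n}. c i \<noteq> None}"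
  define bb where "bb = (\<lambda>i. mat_vec G1 k m i + the (c i))"
  have finU: "finite U" unfolding U_def by auto
  from alt[OF finU, where A=G0 and b=bb and l=l] show ?thesis
  proof
    assume "\<exists>d. \<forall>i\<in>U. (\<Sum>j<l. G0 i j * d j) = bb i"
    then obtain d where d: "\<forall>i\<in>U. (\<Sum>j<l. G0 i j * d j) = bb i" by blast
    define d0 where "d0 = (\<lambda>j. if j < l then d j else 0)"
    have "d0 \<in> bvecs l" by (simp add: d0_def bvecs_def)
    moreover have "mat_vec G0 l d0 i = mat_vec G1 k m i + s" if "i < n" "c i = Some s" for i s
    proof -
      have "mat_vec G0 l d0 i = (\<Sum>j<l. G0 i j * d j)"
        unfolding mat_vec_def d0_def by (rule sum.cong) auto
      also have "\<dots> = bb i" using d that U_def by auto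
      finally show ?thesis using that by (simp add: bb_def)
    qed
    ultimately have "encodable G0 G1 n l k m c" unfolding encodable_def by blast
    then show ?thesis using ne by blast
  next
    assume "\<exists>y. (\<forall>j<l. (\<Sum>i\<in>U. y i * G0 i j) = 0) \<and> (\<Sum>i\<in>U. y i * bb i) = 1"
    then obtain y where y1: "\<forall>j<l. (\<Sum>i\<in>U. y i * G0 i j) = 0"
      and y2: "(\<Sum>i\<in>U. y i * bb i) = 1" by blast
    define y0 where "y0 = (\<lambda>i. if i \<in> U then y i else 0)"
    have "y0 \<in> bvecs n" by (auto simp: y0_def bvecs_def U_def)
    moreover have "(\<Sum>i<n. G0 i j * y0 i) = 0" if "j < l" for j
    proof -
      have "(\<Sum>i<n. G0 i j * y0 i) = (\<Sum>i<n. if c i \<noteq> None then y i * G0 i j else 0)"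
        by (rule sum.cong) (auto simp: y0_def U_def)
      also have "\<dots> = (\<Sum>i\<in>U. y i * G0 i j)"
        unfolding U_def by (rule sum.inter_filter[symmetric]) simp
      finally show ?thesis using y1 that by simp
    qed
    ultimately have yd: "y0 \<in> dual_code G0 n l" by (simp add: dual_code_def)
    have "y0 \<noteq> (\<lambda>_. 0)"
    proof
      assume "y0 = (\<lambda>_. 0)"
      then have "\<forall>i\<in>U. y i = 0" by (metis y0_def)
      then have "(\<Sum>i\<in>U. y i * bb i) = 0" by simp
      then show False using y2 by simp
    qed
    moreover have "\<forall>i<n. y0 i \<noteq> 0 \<longrightarrow> c i \<noteq> None" by (auto simp: y0_def U_def)
    ultimately show ?thesis using yd by blast
  qed
qed

lemma min_dist_le:
  assumes "y \<in> dual_code G0 n l" "y \<noteq> (\<lambda>_. 0)"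
  shows "min_dist G0 n l \<le> hweight n y"
proof -
  have fin: "finite (dual_code G0 n l)"
    by (rule finite_subset[OF _ finite_bvecs[of n]]) (auto simp: dual_code_def)
  have "finite {hweight n x | x. x \<in> dual_code G0 n l \<and> x \<noteq> (\<lambda>_. 0)}"
    using fin by (simp add: finite_image_set)
  then show ?thesis using assms unfolding min_dist_def
    by (auto intro!: Min_le)
qed

theorem corollary2:
  fixes \<beta> :: real and G0 G1 :: "nat \<Rightarrow> nat \<Rightarrow> bit" and m :: "nat \<Rightarrow> bit"
    and n l k :: nat
  assumes "0 < \<beta>" and "\<beta> < 1"
    and "m \<in> bvecs k"
    and "\<forall>w. min_dist G0 n l \<le> w \<and> w \<le> n \<longrightarrow>
           real (weight_enum G0 n l w) \<le> (1/2) ^ l * real (n choose w)"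
  shows "fail_prob \<beta> G0 G1 n l k m \<le> (1/2) ^ l * (1 + \<beta>) ^ n"
proof -
  note b0 = assms(1) and b1 = assms(2) and wt = assms(4)
  define DC where "DC = defect_configs n"
  define D' where "D' = dual_code G0 n l - {\<lambda>_. 0}"
  define F where "F = {c \<in> DC. \<not> encodable G0 G1 n l k m c}"
  define p where "p = config_prob \<beta> n"
  define Q where "Q = (\<lambda>(y::nat \<Rightarrow> bit) (c::nat \<Rightarrow> bit option). \<forall>i<n. y i \<noteq> 0 \<longrightarrow> c i \<noteq> None)"
  have finDC: "finite DC" unfolding DC_def by (rule finite_DC)
  have finD: "finite (dual_code G0 n l)"
    by (rule finite_subset[OF _ finite_bvecs[of n]]) (auto simp: dual_code_def)
  then have finD': "finite D'" unfolding D'_def by simp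
  have pnn: "0 \<le> p c" for c unfolding p_def using b0 b1 by (intro config_prob_nonneg) auto
  have "fail_prob \<beta> G0 G1 n l k m = (\<Sum>c\<in>F. p c)"
    unfolding fail_prob_def F_def DC_def p_def ..
  also have "\<dots> \<le> (\<Sum>c\<in>F. \<Sum>y\<in>D'. if Q y c then p c else 0)"
  proof (rule sum_mono)
    fix c assume "c \<in> F"
    then obtain y where y: "y \<in> D'" "Q y c"
      using cover[of c n G0 G1 l k m] unfolding F_def DC_def D'_def Q_def by blast
    have "(if Q y c then p c else 0) \<le> (\<Sum>y\<in>D'. if Q y c then p c else 0)"
      by (rule member_le_sum) (use y finD' pnn in auto)
    then show "p c \<le> (\<Sum>y\<in>D'. if Q y c then p c else 0)" using y by simp
  qed
  also have "\<dots> \<le> (\<Sum>c\<in>DC. \<Sum>y\<in>D'. if Q y c then p c else 0)"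
    by (rule sum_mono2[OF finDC]) (auto simp: F_def intro!: sum_nonneg pnn)
  also have "\<dots> = (\<Sum>y\<in>D'. \<Sum>c\<in>DC. if Q y c then p c else 0)"
    by (rule sum.swap)
  also have "\<dots> = (\<Sum>y\<in>D'. \<beta> ^ hweight n y)"
  proof (rule sum.cong[OF refl])
    fix y
    have "(\<Sum>c\<in>DC. if Q y c then p c else 0) = (\<Sum>c\<in>{c\<in>DC. Q y c}. p c)"
      by (rule sum.inter_filter[symmetric, OF finDC])
    also have "\<dots> = \<beta> ^ hweight n y"
      unfolding DC_def Q_def p_def by (rule mass)
    finally show "(\<Sum>c\<in>DC. if Q y c then p c else 0) = \<beta> ^ hweight n y" .
  qed
  also have "\<dots> = (\<Sum>w\<in>{..n}. of_nat (card {y\<in>D'. hweight n y = w}) * \<beta> ^ w)"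
    by (rule sum_fun_comp[OF finD']) (auto simp: hweight_le)
  also have "\<dots> \<le> (\<Sum>w\<in>{..n}. (1/2) ^ l * real (n choose w) * \<beta> ^ w)"
  proof (rule sum_mono)
    fix w assume w: "w \<in> {..n}"
    show "of_nat (card {y\<in>D'. hweight n y = w}) * \<beta> ^ w \<le> (1/2) ^ l * real (n choose w) * \<beta> ^ w"
    proof (cases "{y\<in>D'. hweight n y = w} = {}")
      case True
      have "card {y\<in>D'. hweight n y = w} = 0" by (simp only: True card.empty)
      then show ?thesis using b0 by simp
    next
      case False
      then obtain y where y: "y \<in> D'" "hweight n y = w" by blast
      then have md: "min_dist G0 n l \<le> w" using min_dist_le[of y G0 n l] unfolding D'_def by auto
      have "card {y\<in>D'. hweight n y = w} \<le> weight_enum G0 n l w"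
        unfolding weight_enum_def D'_def by (rule card_mono) (use finD in auto)
      then have "real (card {y\<in>D'. hweight n y = w}) \<le> (1/2) ^ l * real (n choose w)"
        using wt md w by (meson atMost_iff of_nat_le_iff order_trans)
      then show ?thesis using b0 by (intro mult_right_mono) auto
    qed
  qed
  also have "\<dots> = (1/2) ^ l * (\<beta> + 1) ^ n"
    by (simp add: binomial_ring sum_distrib_left mult.assoc)
  finally show ?thesis by (simp add: add.commute)
qed

end
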